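(* There exists a universal constant $K>0$ such that the following holds. Let $d\ge 1$, let $q$ be a probability distribution on $[d]=\{1,\dots,d\}$, let $\varepsilon>0$, and let $T\ge K\cdot\frac{\sqrt d}{\varepsilon^2}$. Then there is an algorithm which, given $c=2$ independent samples from each of (unknown) probability distributions $p_1,\dots,p_T$ on $[d]$ (all $2T$ samples mutually independent), distinguishes with probability at least $0.99$ the case $p_{\mathrm{avg}}=q$ from the case $d_{\mathrm{TV}}(p_{\mathrm{avg}},q)>\varepsilon$, where $p_{\mathrm{avg}}=\frac1T\sum_{t=1}^T p_t$.
   Context: $d_{\mathrm{TV}}$ denotes total variation distance. "Distinguishes with probability at least $0.99$" means: the algorithm (which may depend on $d,q,\varepsilon,T$ but not on the $p_t$) outputs "accept" or "reject", and it accepts with probability at least $0.99$ whenever the first case holds and rejects with probability at least $0.99$ whenever the second case holds. *)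

theory Defs
  imports Complex_Main "HOL-Library.FuncSet"
begin

text \<open>Probability distributions on [d] = {1..d}, represented by their mass functions
  (values outside [d] are irrelevant).\<close>
definition is_dist :: "nat \<Rightarrow> (nat \<Rightarrow> real) \<Rightarrow> bool" where
  "is_dist d p \<longleftrightarrow> (\<forall>i\<in>{1..d}. 0 \<le> p i) \<and> (\<Sum>i\<in>{1..d}. p i) = 1"

definition p_avg :: "nat \<Rightarrow> (nat \<Rightarrow> nat \<Rightarrow> real) \<Rightarrow> nat \<Rightarrow> real" where
  "p_avg T p i = (1 / real T) * (\<Sum>t\<in>{1..T}. p t i)"

definition d_TV :: "nat \<Rightarrow> (nat \<Rightarrow> real) \<Rightarrow> (nat \<Rightarrow> real) \<Rightarrow> real" where
  "d_TV d p q = (1/2) * (\<Sum>i\<in>{1..d}. \<bar>p i - q i\<bar>)"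

definition sample_space :: "nat \<Rightarrow> nat \<Rightarrow> (nat \<Rightarrow> nat \<times> nat) set" where
  "sample_space d T = PiE {1..T} (\<lambda>_. {1..d} \<times> {1..d})"

text \<open>Probability that the (possibly randomized) tester A accepts; A s in [0,1] is the
  probability of outputting "accept" on the sample s. All 2T samples are independent,
  the two samples with index t are drawn from p t.\<close>
definition accept_prob ::
  "nat \<Rightarrow> nat \<Rightarrow> ((nat \<Rightarrow> nat \<times> nat) \<Rightarrow> real) \<Rightarrow> (nat \<Rightarrow> nat \<Rightarrow> real) \<Rightarrow> real" where
  "accept_prob d T A p =
     (\<Sum>s\<in>sample_space d T. (\<Prod>t\<in>{1..T}. p t (fst (s t)) * p t (snd (s t))) * A s)"

end

theory Submission
  imports Defs "HOL-Analysis.Analysis"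
begin


definition EXP :: "nat set \<Rightarrow> nat set \<Rightarrow> (nat \<Rightarrow> nat \<Rightarrow> real) \<Rightarrow> ((nat \<Rightarrow> nat) \<Rightarrow> real) \<Rightarrow> real" where
  "EXP I B p F = (\<Sum>X\<in>PiE I (\<lambda>_. B). (\<Prod>t\<in>I. p t (X t)) * F X)"

lemma EXP_prod:
  assumes "finite I" "finite B"
  shows "EXP I B p (\<lambda>X. \<Prod>t\<in>I. f t (X t)) = (\<Prod>t\<in>I. \<Sum>b\<in>B. p t b * f t b)"
proof -
  have "EXP I B p (\<lambda>X. \<Prod>t\<in>I. f t (X t)) = (\<Sum>X\<in>PiE I (\<lambda>_. B). \<Prod>t\<in>I. p t (X t) * f t (X t))"
    unfolding EXP_def by (simp add: prod.distrib)
  also have "\<dots> = (\<Prod>t\<in>I. \<Sum>b\<in>B. p t b * f t b)"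
    using prod_sum_PiE[of I "\<lambda>_. B" "\<lambda>t b. p t b * f t b"] assms by simp
  finally show ?thesis .
qed

lemma EXP_sum: "EXP I B p (\<lambda>X. \<Sum>k\<in>K. F k X) = (\<Sum>k\<in>K. EXP I B p (F k))"
  unfolding EXP_def by (simp add: sum_distrib_left sum.swap[of _ K])

lemma EXP_cmult: "EXP I B p (\<lambda>X. c * F X) = c * EXP I B p F"
  unfolding EXP_def by (simp add: sum_distrib_left mult_ac)

lemma prod_single:
  assumes "finite I" "a \<in> I"
  shows "(\<Prod>t\<in>I. if t = a then x else (1::real)) = x"
proof -
  have "(\<Prod>t\<in>I. if t = a then x else (1::real)) = (\<Prod>t\<in>insert a (I - {a}). if t = a then x else 1)"
    using assms by (simp add: insert_absorb)
  also have "\<dots> = x * (\<Prod>t\<in>I - {a}. if t = a then x else 1)"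
    using assms by (subst prod.insert) auto
  also have "(\<Prod>t\<in>I - {a}. if t = a then x else (1::real)) = 1"
    by (rule prod.neutral) auto
  finally show ?thesis by simp
qed

lemma prod_double:
  assumes "finite I" "a \<in> I" "c \<in> I" "a \<noteq> c"
  shows "(\<Prod>t\<in>I. if t = a then x else if t = c then y else (1::real)) = x * y"
proof -
  have "(\<Prod>t\<in>I. if t = a then x else if t = c then y else (1::real))
      = (\<Prod>t\<in>I. (if t = a then x else 1) * (if t = c then y else 1))"
    using assms by (intro prod.cong) auto
  also have "\<dots> = x * y" using assms by (simp add: prod.distrib prod_single)
  finally show ?thesis .
qed

locale dists =
  fixes I B :: "nat set" and p :: "nat \<Rightarrow> nat \<Rightarrow> real"
  assumes finI: "finite I" and finB: "finite B"
    and psum: "\<And>t. t \<in> I \<Longrightarrow> (\<Sum>b\<in>B. p t b) = 1"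
begin

lemma EXP_one: "EXP I B p (\<lambda>X. 1) = 1"
proof -
  have "EXP I B p (\<lambda>X. 1) = EXP I B p (\<lambda>X. \<Prod>t\<in>I. (\<lambda>t b. 1) t (X t))" by simp
  also have "\<dots> = 1" using finI finB by (subst EXP_prod) (auto simp: psum)
  finally show ?thesis .
qed

lemma EXP_single:
  assumes "a \<in> I"
  shows "EXP I B p (\<lambda>X. f (X a)) = (\<Sum>b\<in>B. p a b * f b)"
proof -
  have "EXP I B p (\<lambda>X. f (X a)) = EXP I B p (\<lambda>X. \<Prod>t\<in>I. (\<lambda>t b. if t = a then f b else 1) t (X t))"
    using assms finI by (simp add: prod_single[where x = "f _"] if_distrib cong: if_cong)
  also have "\<dots> = (\<Prod>t\<in>I. \<Sum>b\<in>B. p t b * (if t = a then f b else 1))"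
    using finI finB by (rule EXP_prod)
  also have "\<dots> = (\<Prod>t\<in>I. if t = a then (\<Sum>b\<in>B. p a b * f b) else 1)"
    by (intro prod.cong) (auto simp: psum)
  also have "\<dots> = (\<Sum>b\<in>B. p a b * f b)" using finI assms by (rule prod_single)
  finally show ?thesis .
qed

lemma EXP_pair:
  assumes "a \<in> I" "c \<in> I" "a \<noteq> c"
  shows "EXP I B p (\<lambda>X. f (X a) * g (X c)) = (\<Sum>b\<in>B. p a b * f b) * (\<Sum>b\<in>B. p c b * g b)"
proof -
  have "EXP I B p (\<lambda>X. f (X a) * g (X c)) = EXP I B p (\<lambda>X. \<Prod>t\<in>I. (\<lambda>t b. if t = a then f b else if t = c then g b else 1) t (X t))"
  proof -
    have "\<And>X. (\<Prod>t\<in>I. (if t = a then f (X t) else if t = c then g (X t) else 1)) = f (X a) * g (X c)"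
    proof -
      fix X
      have "(\<Prod>t\<in>I. (if t = a then f (X t) else if t = c then g (X t) else 1))
         = (\<Prod>t\<in>I. (if t = a then f (X a) else if t = c then g (X c) else 1))"
        by (intro prod.cong) auto
      also have "\<dots> = f (X a) * g (X c)" using prod_double[OF finI assms] .
      finally show "?thesis X" .
    qed
    then show ?thesis by simp
  qed
  also have "\<dots> = (\<Prod>t\<in>I. \<Sum>b\<in>B. p t b * (if t = a then f b else if t = c then g b else 1))"
    using finI finB by (rule EXP_prod)
  also have "\<dots> = (\<Prod>t\<in>I. if t = a then (\<Sum>b\<in>B. p a b * f b) else if t = c then (\<Sum>b\<in>B. p c b * g b) else 1)"
    by (intro prod.cong) (auto simp: psum)
  also have "\<dots> = (\<Sum>b\<in>B. p a b * f b) * (\<Sum>b\<in>B. p c b * g b)" using prod_double[OF finI assms] .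
  finally show ?thesis .
qed

end

lemma factor_sum:
  assumes "finite I" "finite B"
  shows "(\<Sum>s\<in>PiE I (\<lambda>_. B \<times> B). (\<Prod>t\<in>I. p t (fst (s t)) * p t (snd (s t))) *
            (G (\<lambda>t\<in>I. fst (s t)) * H (\<lambda>t\<in>I. snd (s t))))
        = EXP I B p G * EXP I B p H"
proof -
  have "(\<Sum>s\<in>PiE I (\<lambda>_. B \<times> B). (\<Prod>t\<in>I. p t (fst (s t)) * p t (snd (s t))) *
            (G (\<lambda>t\<in>I. fst (s t)) * H (\<lambda>t\<in>I. snd (s t))))
      = (\<Sum>(X,Y)\<in>PiE I (\<lambda>_. B) \<times> PiE I (\<lambda>_. B). ((\<Prod>t\<in>I. p t (X t)) * G X) * ((\<Prod>t\<in>I. p t (Y t)) * H Y))"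
  proof (rule sum.reindex_bij_witness[of _ "\<lambda>(X,Y). (\<lambda>t\<in>I. (X t, Y t))" "\<lambda>s. ((\<lambda>t\<in>I. fst (s t)), (\<lambda>t\<in>I. snd (s t)))"])
    fix s assume s: "s \<in> PiE I (\<lambda>_. B \<times> B)"
    show "(case ((\<lambda>t\<in>I. fst (s t)), (\<lambda>t\<in>I. snd (s t))) of (X, Y) \<Rightarrow> \<lambda>t\<in>I. (X t, Y t)) = s"
      using s by (auto simp: PiE_def extensional_def fun_eq_iff)
    show "((\<lambda>t\<in>I. fst (s t)), (\<lambda>t\<in>I. snd (s t))) \<in> PiE I (\<lambda>_. B) \<times> PiE I (\<lambda>_. B)"
      using s by (auto simp: PiE_def Pi_def)
    show "(case ((\<lambda>t\<in>I. fst (s t)), (\<lambda>t\<in>I. snd (s t))) of (X, Y) \<Rightarrow> (\<Prod>t\<in>I. p t (X t)) * G X * ((\<Prod>t\<in>I. p t (Y t)) * H Y)) =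
         (\<Prod>t\<in>I. p t (fst (s t)) * p t (snd (s t))) * (G (\<lambda>t\<in>I. fst (s t)) * H (\<lambda>t\<in>I. snd (s t)))"
      by (simp add: prod.distrib mult_ac)
  next
    fix XY assume xy: "XY \<in> PiE I (\<lambda>_. B) \<times> PiE I (\<lambda>_. B)"
    obtain X Y where XY: "XY = (X, Y)" by (cases XY)
    show "(\<lambda>s. ((\<lambda>t\<in>I. fst (s t)), (\<lambda>t\<in>I. snd (s t)))) (case XY of (X, Y) \<Rightarrow> \<lambda>t\<in>I. (X t, Y t)) = XY"
      using xy XY by (auto simp: PiE_def extensional_def fun_eq_iff)
    show "(case XY of (X, Y) \<Rightarrow> \<lambda>t\<in>I. (X t, Y t)) \<in> PiE I (\<lambda>_. B \<times> B)"
      using xy XY by (auto simp: PiE_def Pi_def)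
  qed
  also have "\<dots> = EXP I B p G * EXP I B p H"
    unfolding EXP_def by (simp add: sum_product sum.cartesian_product)
  finally show ?thesis .
qed


definition u :: "(nat \<Rightarrow> real) \<Rightarrow> nat \<Rightarrow> nat \<Rightarrow> real" where
  "u q i a = (if a = i then 1 else 0) - q i"

definition Ux :: "nat set \<Rightarrow> (nat \<Rightarrow> real) \<Rightarrow> nat \<Rightarrow> (nat \<Rightarrow> nat) \<Rightarrow> real" where
  "Ux I q i X = (\<Sum>t\<in>I. u q i (X t))"

context dists
begin

lemma mean_u:
  assumes "t \<in> I" "i \<in> B"
  shows "(\<Sum>b\<in>B. p t b * u q i b) = p t i - q i"
proof -
  have e: "\<And>b. p t b * u q i b = (if b = i then p t b else 0) - q i * p t b"
    unfolding u_def by (auto simp: algebra_simps)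
  have "(\<Sum>b\<in>B. p t b * u q i b) = (\<Sum>b\<in>B. (if b = i then p t b else 0)) - q i * (\<Sum>b\<in>B. p t b)"
    unfolding e by (simp add: sum_subtractf sum_distrib_left)
  also have "\<dots> = p t i - q i" using assms finB psum by simp
  finally show ?thesis .
qed

lemma mean_uu:
  assumes "t \<in> I" "i \<in> B" "j \<in> B"
  shows "(\<Sum>b\<in>B. p t b * (u q i b * u q j b)) = (if i = j then p t i else 0) - q i * p t j - q j * p t i + q i * q j"
proof -
  have e: "\<And>b. p t b * (u q i b * u q j b) = (if b = i \<and> b = j then p t b else 0) - q j * (if b = i then p t b else 0)
      - q i * (if b = j then p t b else 0) + q i * q j * p t b"
    unfolding u_def by (auto simp: algebra_simps)
  have "(\<Sum>b\<in>B. p t b * (u q i b * u q j b)) = (\<Sum>b\<in>B. (if b = i \<and> b = j then p t b else 0)) - q j * (\<Sum>b\<in>B. (if b = i then p t b else 0))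
      - q i * (\<Sum>b\<in>B. (if b = j then p t b else 0)) + q i * q j * (\<Sum>b\<in>B. p t b)"
    unfolding e by (simp add: sum.distrib sum_subtractf sum_distrib_left)
  also have "(\<Sum>b\<in>B. (if b = i \<and> b = j then p t b else 0)) = (if i = j then p t i else 0)"
  proof (cases "i = j")
    case True then show ?thesis using assms finB by simp
  next
    case False then show ?thesis by (auto intro!: sum.neutral)
  qed
  also have "(if i = j then p t i else 0) - q j * (\<Sum>b\<in>B. (if b = i then p t b else 0))
      - q i * (\<Sum>b\<in>B. (if b = j then p t b else 0)) + q i * q j * (\<Sum>b\<in>B. p t b)
     = (if i = j then p t i else 0) - q i * p t j - q j * p t i + q i * q j"
    using assms finB psum by (auto simp: algebra_simps)
  finally show ?thesis .
qed

lemma EXP_M: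
  assumes "i \<in> B" "j \<in> B"
  shows "EXP I B p (\<lambda>X. Ux I q i X * Ux I q j X) =
     (\<Sum>t\<in>I. p t i - q i) * (\<Sum>t\<in>I. p t j - q j) + (\<Sum>t\<in>I. (if i = j then p t i else 0) - p t i * p t j)"
proof -
  have "EXP I B p (\<lambda>X. Ux I q i X * Ux I q j X) = EXP I B p (\<lambda>X. \<Sum>s\<in>I. \<Sum>s'\<in>I. u q i (X s) * u q j (X s'))"
    unfolding Ux_def by (simp add: sum_product)
  also have "\<dots> = (\<Sum>s\<in>I. \<Sum>s'\<in>I. EXP I B p (\<lambda>X. u q i (X s) * u q j (X s')))"
    by (simp add: EXP_sum)
  also have "\<dots> = (\<Sum>s\<in>I. \<Sum>s'\<in>I. (p s i - q i) * (p s' j - q j) +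
       (if s = s' then (if i = j then p s i else 0) - p s i * p s j else 0))"
  proof (intro sum.cong refl)
    fix s s' assume s: "s \<in> I" and s': "s' \<in> I"
    show "EXP I B p (\<lambda>X. u q i (X s) * u q j (X s')) = (p s i - q i) * (p s' j - q j) +
       (if s = s' then (if i = j then p s i else 0) - p s i * p s j else 0)"
    proof (cases "s = s'")
      case True
      then show ?thesis using EXP_single[OF s, of "\<lambda>b. u q i b * u q j b"] mean_uu[OF s assms]
        by (simp add: algebra_simps)
    next
      case False
      then show ?thesis using EXP_pair[OF s s' False] mean_u[OF s assms(1)] mean_u[OF s' assms(2)]
        by simp
    qed
  qed
  also have "\<dots> = (\<Sum>t\<in>I. p t i - q i) * (\<Sum>t\<in>I. p t j - q j) + (\<Sum>t\<in>I. (if i = j then p t i else 0) - p t i * p t j)"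
    using finI by (simp add: sum.distrib sum_product)
  finally show ?thesis .
qed

lemma EXP_U:
  assumes "i \<in> B"
  shows "EXP I B p (Ux I q i) = (\<Sum>t\<in>I. p t i - q i)"
proof -
  have "EXP I B p (Ux I q i) = EXP I B p (\<lambda>X. \<Sum>t\<in>I. u q i (X t))" unfolding Ux_def by simp
  also have "\<dots> = (\<Sum>t\<in>I. p t i - q i)"
    by (simp add: EXP_sum EXP_single mean_u assms)
  finally show ?thesis .
qed

end



lemma cs_prob:
  fixes p v :: "nat \<Rightarrow> real"
  assumes "\<And>i. i \<in> B \<Longrightarrow> p i \<ge> 0" "(\<Sum>i\<in>B. p i) = 1"
  shows "(\<Sum>i\<in>B. p i * v i)\<^sup>2 \<le> (\<Sum>i\<in>B. p i * (v i)\<^sup>2)"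
proof -
  have "(\<Sum>i\<in>B. p i * v i)\<^sup>2 = (\<Sum>i\<in>B. (sqrt (p i) * v i) * sqrt (p i))\<^sup>2"
  proof -
    have "\<And>i. i \<in> B \<Longrightarrow> p i * v i = (sqrt (p i) * v i) * sqrt (p i)"
    proof -
      fix i assume "i \<in> B"
      then have "sqrt (p i) * sqrt (p i) = p i" using assms(1) by simp
      then show "p i * v i = (sqrt (p i) * v i) * sqrt (p i)" by (simp add: mult_ac)
    qed
    then show ?thesis by (metis (no_types, lifting) sum.cong)
  qed
  also have "\<dots> \<le> (\<Sum>i\<in>B. (sqrt (p i) * v i)\<^sup>2) * (\<Sum>i\<in>B. (sqrt (p i))\<^sup>2)"
    by (rule Cauchy_Schwarz_ineq_sum)
  also have "\<dots> = (\<Sum>i\<in>B. p i * (v i)\<^sup>2) * (\<Sum>i\<in>B. p i)"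
    using assms(1) by (simp add: power_mult_distrib)
  finally show ?thesis using assms(2) by simp
qed

definition ZZ :: "nat set \<Rightarrow> nat set \<Rightarrow> (nat \<Rightarrow> real) \<Rightarrow> (nat \<Rightarrow> real) \<Rightarrow> (nat \<Rightarrow> nat \<times> nat) \<Rightarrow> real" where
  "ZZ I B w q s = (\<Sum>i\<in>B. w i * (Ux I q i (\<lambda>t\<in>I. fst (s t)) * Ux I q i (\<lambda>t\<in>I. snd (s t))))"

locale dists2 = dists +
  assumes pnn: "\<And>t b. t \<in> I \<Longrightarrow> b \<in> B \<Longrightarrow> p t b \<ge> 0"
begin

definition "PP i = (\<Sum>t\<in>I. p t i)"
definition "CC i j = (\<Sum>t\<in>I. (if i = j then p t i else 0) - p t i * p t j)"

lemma QF:
  "(\<Sum>i\<in>B. \<Sum>j\<in>B. CC i j * v i * v j) = (\<Sum>t\<in>I. (\<Sum>i\<in>B. p t i * (v i)\<^sup>2) - (\<Sum>i\<in>B. p t i * v i)\<^sup>2)"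
proof -
  have "(\<Sum>i\<in>B. \<Sum>j\<in>B. CC i j * v i * v j) = (\<Sum>i\<in>B. \<Sum>j\<in>B. \<Sum>t\<in>I. (if i = j then p t i * v i * v j else 0) - (p t i * v i) * (p t j * v j))"
    unfolding CC_def sum_distrib_right by (intro sum.cong refl) (auto simp: algebra_simps)
  also have "\<dots> = (\<Sum>t\<in>I. (\<Sum>i\<in>B. \<Sum>j\<in>B. (if i = j then p t i * v i * v j else 0)) - (\<Sum>i\<in>B. \<Sum>j\<in>B. (p t i * v i) * (p t j * v j)))"
    by (simp add: sum_subtractf[symmetric]) (subst (1 2) sum.swap, simp)
  also have "\<dots> = (\<Sum>t\<in>I. (\<Sum>i\<in>B. p t i * (v i)\<^sup>2) - (\<Sum>i\<in>B. p t i * v i)\<^sup>2)"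
    using finB by (simp add: power2_eq_square sum_product mult_ac)
  finally show ?thesis .
qed

lemma QF_t_nonneg: "t \<in> I \<Longrightarrow> 0 \<le> (\<Sum>i\<in>B. p t i * (v i)\<^sup>2) - (\<Sum>i\<in>B. p t i * v i)\<^sup>2"
  using cs_prob[of B "p t" v] pnn psum by simp

lemma QF_nonneg: "0 \<le> (\<Sum>i\<in>B. \<Sum>j\<in>B. CC i j * v i * v j)"
  unfolding QF by (intro sum_nonneg QF_t_nonneg)

lemma QF_upper: "(\<Sum>i\<in>B. \<Sum>j\<in>B. CC i j * v i * v j) \<le> (\<Sum>i\<in>B. PP i * (v i)\<^sup>2)"
proof -
  have "(\<Sum>i\<in>B. \<Sum>j\<in>B. CC i j * v i * v j) \<le> (\<Sum>t\<in>I. \<Sum>i\<in>B. p t i * (v i)\<^sup>2)"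
    unfolding QF by (intro sum_mono) simp
  also have "\<dots> = (\<Sum>i\<in>B. PP i * (v i)\<^sup>2)"
    unfolding PP_def by (subst sum.swap) (simp add: sum_distrib_right)
  finally show ?thesis .
qed

lemma PP_nonneg: "i \<in> B \<Longrightarrow> PP i \<ge> 0"
  unfolding PP_def using pnn by (simp add: sum_nonneg)

lemma CC_diag: "CC i i \<le> PP i"
  unfolding CC_def PP_def by (intro sum_mono) simp

lemma CC_split: "CC i j = (if i = j then PP i else 0) - (\<Sum>t\<in>I. p t i * p t j)"
  unfolding CC_def PP_def by (simp add: sum_subtractf)

lemma CC_sq_bound:
  assumes wnn: "\<And>i. i \<in> B \<Longrightarrow> w i \<ge> 0"
  shows "(\<Sum>i\<in>B. \<Sum>j\<in>B. w i * w j * (CC i j)\<^sup>2) \<le> (\<Sum>i\<in>B. (w i)\<^sup>2 * (PP i)\<^sup>2)"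
proof -
  have e1: "(\<Sum>i\<in>B. \<Sum>j\<in>B. w i * w j * (CC i j)\<^sup>2) =
      (\<Sum>i\<in>B. \<Sum>j\<in>B. w i * w j * CC i j * (if i = j then PP i else 0)) - (\<Sum>i\<in>B. \<Sum>j\<in>B. w i * w j * CC i j * (\<Sum>t\<in>I. p t i * p t j))"
    by (simp add: sum_subtractf[symmetric] power2_eq_square algebra_simps) (subst (2) CC_split, simp add: algebra_simps)
  have e2: "(\<Sum>i\<in>B. \<Sum>j\<in>B. w i * w j * CC i j * (if i = j then PP i else 0)) = (\<Sum>i\<in>B. (w i)\<^sup>2 * CC i i * PP i)"
    using finB by (simp add: power2_eq_square if_distrib cong: if_cong)
  have e3: "(\<Sum>i\<in>B. \<Sum>j\<in>B. w i * w j * CC i j * (\<Sum>t\<in>I. p t i * p t j)) =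
       (\<Sum>t\<in>I. \<Sum>i\<in>B. \<Sum>j\<in>B. CC i j * (w i * p t i) * (w j * p t j))"
    by (simp add: sum_distrib_left) (subst (1 2) sum.swap, simp add: mult_ac)
  have e4: "(\<Sum>t\<in>I. \<Sum>i\<in>B. \<Sum>j\<in>B. CC i j * (w i * p t i) * (w j * p t j)) \<ge> 0"
    by (rule sum_nonneg) (rule QF_nonneg)
  have e5: "(\<Sum>i\<in>B. (w i)\<^sup>2 * CC i i * PP i) \<le> (\<Sum>i\<in>B. (w i)\<^sup>2 * (PP i)\<^sup>2)"
  proof (intro sum_mono)
    fix i assume "i \<in> B"
    then have "(w i)\<^sup>2 * (CC i i * PP i) \<le> (w i)\<^sup>2 * (PP i * PP i)"
      using mult_left_mono[OF mult_right_mono[OF CC_diag PP_nonneg] zero_le_power2[of "w i"]] by simp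
    then show "(w i)\<^sup>2 * CC i i * PP i \<le> (w i)\<^sup>2 * (PP i)\<^sup>2"
      by (simp add: power2_eq_square mult.assoc)
  qed
  show ?thesis using e1 e2 e3 e4 e5 by linarith
qed

definition "mu q i = (\<Sum>t\<in>I. p t i - q i)"
definition "MM q i j = mu q i * mu q j + CC i j"

lemma var_bound:
  assumes wnn: "\<And>i. i \<in> B \<Longrightarrow> w i \<ge> 0"
  shows "(\<Sum>i\<in>B. \<Sum>j\<in>B. w i * w j * (MM q i j)\<^sup>2) - (\<Sum>i\<in>B. w i * (mu q i)\<^sup>2)\<^sup>2
     \<le> (\<Sum>i\<in>B. (w i)\<^sup>2 * (PP i)\<^sup>2) + 2 * (\<Sum>i\<in>B. PP i * (w i * mu q i)\<^sup>2)"
proof -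
  have sq: "(\<Sum>i\<in>B. w i * (mu q i)\<^sup>2)\<^sup>2 = (\<Sum>i\<in>B. \<Sum>j\<in>B. w i * w j * ((mu q i)\<^sup>2 * (mu q j)\<^sup>2))"
    by (simp add: power2_eq_square sum_product mult_ac)
  have "(\<Sum>i\<in>B. \<Sum>j\<in>B. w i * w j * (MM q i j)\<^sup>2) - (\<Sum>i\<in>B. w i * (mu q i)\<^sup>2)\<^sup>2
      = (\<Sum>i\<in>B. \<Sum>j\<in>B. w i * w j * (CC i j)\<^sup>2) + 2 * (\<Sum>i\<in>B. \<Sum>j\<in>B. CC i j * (w i * mu q i) * (w j * mu q j))"
    unfolding sq by (simp add: sum_subtractf[symmetric] sum.distrib[symmetric] sum_distrib_left MM_def power2_eq_square algebra_simps)
  also have "\<dots> \<le> (\<Sum>i\<in>B. (w i)\<^sup>2 * (PP i)\<^sup>2) + 2 * (\<Sum>i\<in>B. PP i * (w i * mu q i)\<^sup>2)"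
    using CC_sq_bound[of w, OF wnn] QF_upper[of "\<lambda>i. w i * mu q i"] by linarith
  finally show ?thesis .
qed

definition "EO F = (\<Sum>s\<in>PiE I (\<lambda>_. B \<times> B). (\<Prod>t\<in>I. p t (fst (s t)) * p t (snd (s t))) * F s)"

lemma EO_factor: "EO (\<lambda>s. G (\<lambda>t\<in>I. fst (s t)) * H (\<lambda>t\<in>I. snd (s t))) = EXP I B p G * EXP I B p H"
  unfolding EO_def using factor_sum[OF finI finB] by simp

lemma EO_one: "EO (\<lambda>s. 1) = 1"
  using EO_factor[of "\<lambda>_. 1" "\<lambda>_. 1"] EXP_one by simp

lemma EO_sum: "EO (\<lambda>s. \<Sum>k\<in>K. F k s) = (\<Sum>k\<in>K. EO (F k))"
  unfolding EO_def by (simp add: sum_distrib_left) (rule sum.swap)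

lemma EO_cmult: "EO (\<lambda>s. c * F s) = c * EO F"
  unfolding EO_def by (simp add: sum_distrib_left mult_ac)

lemma EO_add: "EO (\<lambda>s. F s + G s) = EO F + EO G"
  unfolding EO_def by (simp add: sum.distrib algebra_simps)

lemma EO_diff: "EO (\<lambda>s. F s - G s) = EO F - EO G"
  unfolding EO_def by (simp add: sum_subtractf algebra_simps)

lemma EO_mono:
  assumes "\<And>s. s \<in> PiE I (\<lambda>_. B \<times> B) \<Longrightarrow> F s \<le> G s"
  shows "EO F \<le> EO G"
  unfolding EO_def
proof (intro sum_mono mult_left_mono assms)
  fix s assume s: "s \<in> PiE I (\<lambda>_. B \<times> B)"
  show "0 \<le> (\<Prod>t\<in>I. p t (fst (s t)) * p t (snd (s t)))"
  proof (intro prod_nonneg mult_nonneg_nonneg pnn)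
    fix t assume t: "t \<in> I"
    then have "s t \<in> B \<times> B" using s by (auto simp: PiE_def Pi_def)
    then show "fst (s t) \<in> B" "snd (s t) \<in> B" by auto
  qed (auto)
qed (auto)


lemma EXP_U_mu: "i \<in> B \<Longrightarrow> EXP I B p (Ux I q i) = mu q i"
  using EXP_U unfolding mu_def by simp

lemma EXP_M_MM: "i \<in> B \<Longrightarrow> j \<in> B \<Longrightarrow> EXP I B p (\<lambda>X. Ux I q i X * Ux I q j X) = MM q i j"
  using EXP_M unfolding MM_def mu_def CC_def by simp

lemma EO_Z: "EO (ZZ I B w q) = (\<Sum>i\<in>B. w i * (mu q i)\<^sup>2)"
proof -
  have "EO (ZZ I B w q) = (\<Sum>i\<in>B. w i * EO (\<lambda>s. Ux I q i (\<lambda>t\<in>I. fst (s t)) * Ux I q i (\<lambda>t\<in>I. snd (s t))))"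
    unfolding ZZ_def by (simp add: EO_sum EO_cmult)
  also have "\<dots> = (\<Sum>i\<in>B. w i * (mu q i)\<^sup>2)"
    by (intro sum.cong refl) (simp add: EO_factor EXP_U_mu power2_eq_square)
  finally show ?thesis .
qed

lemma EO_Z2: "EO (\<lambda>s. (ZZ I B w q s)\<^sup>2) = (\<Sum>i\<in>B. \<Sum>j\<in>B. w i * w j * (MM q i j)\<^sup>2)"
proof -
  have "EO (\<lambda>s. (ZZ I B w q s)\<^sup>2) = EO (\<lambda>s. \<Sum>i\<in>B. \<Sum>j\<in>B. w i * w j *
      ((\<lambda>X. Ux I q i X * Ux I q j X) (\<lambda>t\<in>I. fst (s t)) * (\<lambda>X. Ux I q i X * Ux I q j X) (\<lambda>t\<in>I. snd (s t))))"
    unfolding ZZ_def power2_eq_square sum_product by (simp add: mult_ac)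
  also have "\<dots> = (\<Sum>i\<in>B. \<Sum>j\<in>B. w i * w j * EO (\<lambda>s.
      (\<lambda>X. Ux I q i X * Ux I q j X) (\<lambda>t\<in>I. fst (s t)) * (\<lambda>X. Ux I q i X * Ux I q j X) (\<lambda>t\<in>I. snd (s t))))"
    by (simp only: EO_sum EO_cmult)
  also have "\<dots> = (\<Sum>i\<in>B. \<Sum>j\<in>B. w i * w j * (MM q i j)\<^sup>2)"
  proof (intro sum.cong refl)
    fix i j assume ij: "i \<in> B" "j \<in> B"
    have "EO (\<lambda>s. (\<lambda>X. Ux I q i X * Ux I q j X) (\<lambda>t\<in>I. fst (s t)) * (\<lambda>X. Ux I q i X * Ux I q j X) (\<lambda>t\<in>I. snd (s t)))
      = EXP I B p (\<lambda>X. Ux I q i X * Ux I q j X) * EXP I B p (\<lambda>X. Ux I q i X * Ux I q j X)"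
      by (rule EO_factor)
    then show "w i * w j * EO (\<lambda>s. (\<lambda>X. Ux I q i X * Ux I q j X) (\<lambda>t\<in>I. fst (s t)) * (\<lambda>X. Ux I q i X * Ux I q j X) (\<lambda>t\<in>I. snd (s t)))
      = w i * w j * (MM q i j)\<^sup>2"
      using ij by (simp add: EXP_M_MM power2_eq_square)
  qed
  finally show ?thesis .
qed

lemma cheb_null:
  assumes "\<tau> > 0"
  shows "1 - EO (\<lambda>s. if ZZ I B w q s \<le> \<tau> then 1 else 0) \<le> EO (\<lambda>s. (ZZ I B w q s)\<^sup>2) / \<tau>\<^sup>2"
proof -
  have "1 - EO (\<lambda>s. if ZZ I B w q s \<le> \<tau> then 1 else 0) = EO (\<lambda>s. 1 - (if ZZ I B w q s \<le> \<tau> then 1 else 0))"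
    by (simp add: EO_diff EO_one)
  also have "\<dots> \<le> EO (\<lambda>s. (1 / \<tau>\<^sup>2) * (ZZ I B w q s)\<^sup>2)"
  proof (rule EO_mono)
    fix s
    show "1 - (if ZZ I B w q s \<le> \<tau> then 1 else 0) \<le> 1 / \<tau>\<^sup>2 * (ZZ I B w q s)\<^sup>2"
    proof (cases "ZZ I B w q s \<le> \<tau>")
      case False
      then have "\<tau>\<^sup>2 \<le> (ZZ I B w q s)\<^sup>2" using assms by (intro power_mono) auto
      then show ?thesis using False assms by (simp add: field_simps)
    qed simp
  qed
  also have "\<dots> = EO (\<lambda>s. (ZZ I B w q s)\<^sup>2) / \<tau>\<^sup>2" by (simp only: EO_cmult) simp
  finally show ?thesis .
qed

lemma cheb_far:
  assumes "\<tau> < EO (ZZ I B w q)"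
  shows "EO (\<lambda>s. if ZZ I B w q s \<le> \<tau> then 1 else 0) \<le> (EO (\<lambda>s. (ZZ I B w q s)\<^sup>2) - (EO (ZZ I B w q))\<^sup>2) / (EO (ZZ I B w q) - \<tau>)\<^sup>2"
proof -
  define E where "E = EO (ZZ I B w q)"
  have Et: "E - \<tau> > 0" using assms E_def by simp
  have "EO (\<lambda>s. if ZZ I B w q s \<le> \<tau> then 1 else 0) \<le> EO (\<lambda>s. (1 / (E - \<tau>)\<^sup>2) * ((ZZ I B w q s)\<^sup>2 - (2 * E) * ZZ I B w q s + E\<^sup>2 * 1))"
  proof (rule EO_mono)
    fix s
    show "(if ZZ I B w q s \<le> \<tau> then 1 else 0) \<le> (1 / (E - \<tau>)\<^sup>2) * ((ZZ I B w q s)\<^sup>2 - (2 * E) * ZZ I B w q s + E\<^sup>2 * 1)"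
    proof (cases "ZZ I B w q s \<le> \<tau>")
      case True
      then have "(E - \<tau>)\<^sup>2 \<le> (E - ZZ I B w q s)\<^sup>2" using Et by (intro power_mono) auto
      also have "(E - ZZ I B w q s)\<^sup>2 = (ZZ I B w q s)\<^sup>2 - (2 * E) * ZZ I B w q s + E\<^sup>2 * 1" by (simp add: power2_eq_square algebra_simps)
      finally show ?thesis using True Et by (simp add: field_simps)
    next
      case False
      have "0 \<le> (E - ZZ I B w q s)\<^sup>2" by simp
      also have "(E - ZZ I B w q s)\<^sup>2 = (ZZ I B w q s)\<^sup>2 - (2 * E) * ZZ I B w q s + E\<^sup>2 * 1" by (simp add: power2_eq_square algebra_simps)
      finally show ?thesis using False by simp
    qed
  qed
  also have "\<dots> = (1 / (E - \<tau>)\<^sup>2) * (EO (\<lambda>s. (ZZ I B w q s)\<^sup>2) - (2 * E) * E + E\<^sup>2 * 1)"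
    by (simp only: EO_cmult EO_add EO_diff EO_one E_def)
  also have "EO (\<lambda>s. (ZZ I B w q s)\<^sup>2) - (2 * E) * E + E\<^sup>2 * 1 = EO (\<lambda>s. (ZZ I B w q s)\<^sup>2) - E\<^sup>2"
    by (simp add: power2_eq_square)
  also have "1 / (E - \<tau>)\<^sup>2 * (EO (\<lambda>s. (ZZ I B w q s)\<^sup>2) - E\<^sup>2) = (EO (\<lambda>s. (ZZ I B w q s)\<^sup>2) - E\<^sup>2) / (E - \<tau>)\<^sup>2"
    by simp
  finally show ?thesis unfolding E_def .
qed

end



lemma sq_sum_le: "((x::real) + y)\<^sup>2 \<le> 2 * x\<^sup>2 + 2 * y\<^sup>2"
proof -
  have "0 \<le> (x - y)\<^sup>2" by simp
  then show ?thesis by (simp add: power2_eq_square algebra_simps)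
qed

lemma numeric:
  fixes d T \<epsilon> E V :: real
  assumes d: "d \<ge> 1" and e0: "\<epsilon> > 0" and e1: "\<epsilon> \<le> 1"
    and T: "T \<ge> 2000 * sqrt d / \<epsilon>\<^sup>2"
    and E: "E > 2 * (\<epsilon>\<^sup>2 * T\<^sup>2 / d)"
    and V: "V \<le> 2 * E + 2 * (T\<^sup>2 / d) + 2 * E * sqrt E + 2 * (T / d) * E"
  shows "V / (E - \<epsilon>\<^sup>2 * T\<^sup>2 / d)\<^sup>2 \<le> 0.01"
proof -
  define \<tau> where "\<tau> = \<epsilon>\<^sup>2 * T\<^sup>2 / d"
  have sd: "sqrt d \<ge> 1" using d by simp
  have e2: "\<epsilon>\<^sup>2 > 0" "\<epsilon>\<^sup>2 \<le> 1" using e0 e1 by (auto simp: power_le_one)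
  have h0: "T * \<epsilon>\<^sup>2 \<ge> 2000 * sqrt d" using T e2 by (simp add: field_simps)
  have h0': "T * \<epsilon>\<^sup>2 \<ge> 2000" using h0 sd by linarith
  have "0 < T * \<epsilon>\<^sup>2" using h0' by linarith
  then have Tpos: "T > 0" using e2 by (simp add: zero_less_mult_iff)
  have h1: "(T * \<epsilon>\<^sup>2)\<^sup>2 \<ge> (2000 * sqrt d)\<^sup>2" using h0 sd by (intro power_mono) auto
  then have h1': "(T * \<epsilon>\<^sup>2)\<^sup>2 \<ge> 2000\<^sup>2 * d" using d by (simp add: power_mult_distrib real_sqrt_pow2)
  have "\<epsilon>\<^sup>2 * \<tau> = (T * \<epsilon>\<^sup>2)\<^sup>2 / d" unfolding \<tau>_def by (simp add: power2_eq_square)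
  also have "\<dots> \<ge> 2000\<^sup>2 * d / d" using h1' d by (intro divide_right_mono) auto
  finally have het: "\<epsilon>\<^sup>2 * \<tau> \<ge> 2000\<^sup>2" using d by simp
  have ht: "\<tau> \<ge> 2000\<^sup>2"
  proof -
    have "\<tau> \<ge> 0" unfolding \<tau>_def using d by simp
    then have "\<epsilon>\<^sup>2 * \<tau> \<le> \<tau>" using mult_left_le_one_le[of \<tau> "\<epsilon>\<^sup>2"] e2 by simp
    then show ?thesis using het by linarith
  qed
  have Et: "E > 2 * \<tau>" using E \<tau>_def by simp
  have Epos: "E > 0" using Et ht by simp
  have ET: "E - \<tau> \<ge> E / 2" using Et by simp
  have sq: "(E - \<tau>)\<^sup>2 \<ge> (E / 2)\<^sup>2" using ET Epos by (intro power_mono) auto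
  have step1: "V / (E - \<tau>)\<^sup>2 \<le> 4 * (2 * E + 2 * (T\<^sup>2 / d) + 2 * E * sqrt E + 2 * (T / d) * E) / E\<^sup>2"
  proof (cases "V \<ge> 0")
    case True
    have "V / (E - \<tau>)\<^sup>2 \<le> V / (E / 2)\<^sup>2"
    proof (rule divide_left_mono)
      show "0 < (E - \<tau>)\<^sup>2 * (E / 2)\<^sup>2" using ET Epos by (intro mult_pos_pos) auto
    qed (use True sq in auto)
    also have "\<dots> = 4 * V / E\<^sup>2" by (simp add: power2_eq_square field_simps)
    also have "\<dots> \<le> 4 * (2 * E + 2 * (T\<^sup>2 / d) + 2 * E * sqrt E + 2 * (T / d) * E) / E\<^sup>2"
      using V Epos by (intro divide_right_mono) auto
    finally show ?thesis .
  next
    case False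
    have "V / (E - \<tau>)\<^sup>2 \<le> 0" using False by (simp add: divide_nonpos_nonneg)
    also have "0 \<le> 4 * (2 * E + 2 * (T\<^sup>2 / d) + 2 * E * sqrt E + 2 * (T / d) * E) / E\<^sup>2"
      using Epos d Tpos by (intro divide_nonneg_nonneg) auto
    finally show ?thesis .
  qed
  have sE: "sqrt E * sqrt E = E" using Epos by simp
  have split: "4 * (2 * E + 2 * (T\<^sup>2 / d) + 2 * E * sqrt E + 2 * (T / d) * E) / E\<^sup>2
      = 8 / E + 8 * (T\<^sup>2 / d) / E\<^sup>2 + 8 / sqrt E + 8 * (T / d) / E"
  proof -
    have "sqrt E > 0" using Epos by simp
    then show ?thesis using Epos sE by (simp add: field_simps power2_eq_square)
  qed
  have b1: "8 / E \<le> 8 / 2000\<^sup>2" using Et ht Epos by (intro divide_left_mono) auto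
  have b2: "8 * (T\<^sup>2 / d) / E\<^sup>2 \<le> 2 / 2000\<^sup>2"
  proof -
    have Td: "T\<^sup>2 / d = \<tau> / \<epsilon>\<^sup>2" unfolding \<tau>_def using e2 by simp
    have "E\<^sup>2 \<ge> (2 * \<tau>)\<^sup>2" using Et ht by (intro power_mono) auto
    then have "8 * (T\<^sup>2 / d) / E\<^sup>2 \<le> 8 * (\<tau> / \<epsilon>\<^sup>2) / (2 * \<tau>)\<^sup>2"
      unfolding Td using ht e2 Epos by (intro divide_left_mono) auto
    also have "\<dots> = 2 / (\<epsilon>\<^sup>2 * \<tau>)" using ht e2 by (simp add: field_simps power2_eq_square)
    also have "\<dots> \<le> 2 / 2000\<^sup>2" using het by (intro divide_left_mono) auto
    finally show ?thesis .
  qed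
  have b3: "8 / sqrt E \<le> 8 / 2000"
  proof -
    have "sqrt E \<ge> sqrt (2000\<^sup>2)" using Et ht by (subst real_sqrt_le_iff) simp
    then have "sqrt E \<ge> 2000" by simp
    then show ?thesis using Epos by (intro divide_left_mono) auto
  qed
  have b4: "8 * (T / d) / E \<le> 4 / 2000"
  proof -
    have "d * E \<ge> 2 * (\<epsilon>\<^sup>2 * T\<^sup>2)" using E d by (simp add: field_simps)
    then have "8 * (T / d) / E = 8 * T / (d * E)" using d by simp
    also have "\<dots> \<le> 8 * T / (2 * (\<epsilon>\<^sup>2 * T\<^sup>2))"
      using \<open>d * E \<ge> _\<close> Tpos e2 Epos d by (intro divide_left_mono) auto
    also have "\<dots> = 4 / (T * \<epsilon>\<^sup>2)" using Tpos e2 by (simp add: field_simps power2_eq_square)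
    also have "\<dots> \<le> 4 / 2000" using h0' by (intro divide_left_mono) auto
    finally show ?thesis .
  qed
  have "V / (E - \<epsilon>\<^sup>2 * T\<^sup>2 / d)\<^sup>2 \<le> 8 / 2000\<^sup>2 + 2 / 2000\<^sup>2 + 8 / 2000 + 4 / 2000"
    using step1 split b1 b2 b3 b4 unfolding \<tau>_def by linarith
  moreover have "8 / 2000\<^sup>2 + 2 / 2000\<^sup>2 + 8 / 2000 + 4 / 2000 \<le> (0.01::real)" by simp
  ultimately show ?thesis by linarith
qed



context dists2
begin

lemma main_cases:
  fixes d T :: nat and q :: "nat \<Rightarrow> real" and \<epsilon> :: real and w :: "nat \<Rightarrow> real" and \<tau> :: real
  assumes I: "I = {1..T}" and B: "B = {1..d}" and d1: "d \<ge> 1" and qd: "is_dist d q" and e0: "\<epsilon> > 0"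
    and TK: "real T \<ge> 2000 * sqrt (real d) / \<epsilon>\<^sup>2"
    and w_def: "w = (\<lambda>i. 1 / (real d * q i + 1))" and \<tau>_def: "\<tau> = \<epsilon>\<^sup>2 * (real T)\<^sup>2 / real d"
  shows "((\<forall>i\<in>B. p_avg T p i = q i) \<longrightarrow> 1 - EO (\<lambda>s. if ZZ I B w q s \<le> \<tau> then 1 else 0) \<le> 0.01) \<and>
         (d_TV d (p_avg T p) q > \<epsilon> \<longrightarrow> EO (\<lambda>s. if ZZ I B w q s \<le> \<tau> then 1 else 0) \<le> 0.01)"
proof -
  have sd: "sqrt (real d) \<ge> 1" using d1 by simp
  have "2000 * sqrt (real d) / \<epsilon>\<^sup>2 > 0" using sd e0 by simp
  then have Tpos: "real T > 0" using TK by linarith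
  have cardI: "card I = T" using I by simp
  have qnn: "\<And>i. i \<in> B \<Longrightarrow> q i \<ge> 0" and qsum: "(\<Sum>i\<in>B. q i) = 1"
    using qd B unfolding is_dist_def by auto
  have mu_eq: "\<And>i. mu q i = PP i - real T * q i"
    unfolding mu_def PP_def using cardI by (simp add: sum_subtractf)
  have pavg: "\<And>i. p_avg T p i = PP i / real T"
    unfolding p_avg_def PP_def using I by simp
  have wpos: "\<And>i. i \<in> B \<Longrightarrow> w i > 0" unfolding w_def using qnn by (simp add: add_nonneg_pos)
  have w1: "\<And>i. i \<in> B \<Longrightarrow> w i \<le> 1"
  proof -
    fix i assume i: "i \<in> B"
    have "1 \<le> real d * q i + 1" using qnn[OF i] by simp
    then show "w i \<le> 1" unfolding w_def by simp
  qed
  have wq: "\<And>i. i \<in> B \<Longrightarrow> w i * q i \<le> 1 / real d"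
  proof -
    fix i assume i: "i \<in> B"
    have "0 < real d * q i + 1" using qnn[OF i] by (simp add: add_nonneg_pos)
    then show "w i * q i \<le> 1 / real d" unfolding w_def using d1 by (simp add: field_simps)
  qed
  have wnn: "\<And>i. i \<in> B \<Longrightarrow> w i \<ge> 0" using wpos by (simp add: less_imp_le)
  define E where "E = (\<Sum>i\<in>B. w i * (mu q i)\<^sup>2)"
  have Enn: "E \<ge> 0" unfolding E_def using wnn by (simp add: sum_nonneg)
  have EOZ: "EO (ZZ I B w q) = E" unfolding E_def by (rule EO_Z)
  have Var: "EO (\<lambda>s. (ZZ I B w q s)\<^sup>2) - E\<^sup>2 \<le> (\<Sum>i\<in>B. (w i)\<^sup>2 * (PP i)\<^sup>2) + 2 * (\<Sum>i\<in>B. PP i * (w i * mu q i)\<^sup>2)"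
    unfolding EO_Z2 E_def by (rule var_bound) (rule wnn)
  have w2q2: "(\<Sum>i\<in>B. (w i * q i)\<^sup>2) \<le> 1 / real d"
  proof -
    have "(\<Sum>i\<in>B. (w i * q i)\<^sup>2) \<le> (\<Sum>i\<in>B. (1 / real d) * q i)"
    proof (intro sum_mono)
      fix i assume i: "i \<in> B"
      have "(w i * q i)\<^sup>2 = (w i * q i) * (w i * q i)" by (simp add: power2_eq_square)
      also have "\<dots> \<le> (1 / real d) * (w i * q i)"
        using wq[OF i] wnn[OF i] qnn[OF i] by (intro mult_right_mono) auto
      also have "\<dots> \<le> (1 / real d) * q i"
        using mult_left_le_one_le[OF qnn[OF i] wnn[OF i] w1[OF i]] by (intro mult_left_mono) auto
      finally show "(w i * q i)\<^sup>2 \<le> (1 / real d) * q i" .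
    qed
    also have "\<dots> = 1 / real d" using qsum by (simp only: sum_distrib_left[symmetric])
    finally show ?thesis .
  qed
  have taupos: "\<tau> > 0" unfolding \<tau>_def using e0 Tpos d1 by simp
  have h1: "(real T * \<epsilon>\<^sup>2)\<^sup>2 \<ge> 2000\<^sup>2 * real d"
  proof -
    have "real T * \<epsilon>\<^sup>2 \<ge> 2000 * sqrt (real d)" using TK e0 by (simp add: field_simps)
    then have "(real T * \<epsilon>\<^sup>2)\<^sup>2 \<ge> (2000 * sqrt (real d))\<^sup>2" using sd by (intro power_mono) auto
    then show ?thesis by (simp add: power_mult_distrib)
  qed
  show ?thesis
  proof (intro conjI impI)
    assume null: "\<forall>i\<in>B. p_avg T p i = q i"
    have PPq: "\<And>i. i \<in> B \<Longrightarrow> PP i = real T * q i"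
    proof -
      fix i assume "i \<in> B"
      then have "PP i / real T = q i" using null pavg by simp
      then show "PP i = real T * q i" using Tpos by (simp add: field_simps)
    qed
    have mu0: "\<And>i. i \<in> B \<Longrightarrow> mu q i = 0" using PPq mu_eq by simp
    have E0: "E = 0" unfolding E_def using mu0 by simp
    have "EO (\<lambda>s. (ZZ I B w q s)\<^sup>2) \<le> (\<Sum>i\<in>B. (w i)\<^sup>2 * (PP i)\<^sup>2)"
      using Var E0 mu0 by simp
    also have "\<dots> = (real T)\<^sup>2 * (\<Sum>i\<in>B. (w i * q i)\<^sup>2)"
      using PPq by (simp add: sum_distrib_left power_mult_distrib mult_ac)
    also have "\<dots> \<le> (real T)\<^sup>2 * (1 / real d)" using w2q2 by (intro mult_left_mono) auto
    finally have EZ2: "EO (\<lambda>s. (ZZ I B w q s)\<^sup>2) \<le> (real T)\<^sup>2 / real d" by simp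
    have "1 - EO (\<lambda>s. if ZZ I B w q s \<le> \<tau> then 1 else 0) \<le> EO (\<lambda>s. (ZZ I B w q s)\<^sup>2) / \<tau>\<^sup>2"
      by (rule cheb_null[OF taupos])
    also have "\<dots> \<le> ((real T)\<^sup>2 / real d) / \<tau>\<^sup>2" using EZ2 taupos by (intro divide_right_mono) auto
    also have "\<dots> = real d / (real T * \<epsilon>\<^sup>2)\<^sup>2"
      unfolding \<tau>_def using Tpos e0 d1 by (simp add: field_simps power2_eq_square)
    also have "\<dots> \<le> real d / (2000\<^sup>2 * real d)" using h1 d1 Tpos e0 by (intro divide_left_mono) auto
    also have "\<dots> \<le> 0.01" using d1 by simp
    finally show "1 - EO (\<lambda>s. if ZZ I B w q s \<le> \<tau> then 1 else 0) \<le> 0.01" .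
  next
    assume far: "d_TV d (p_avg T p) q > \<epsilon>"
    have dTV: "d_TV d (p_avg T p) q = (\<Sum>i\<in>B. \<bar>mu q i\<bar>) / (2 * real T)"
    proof -
      have "\<And>i. \<bar>p_avg T p i - q i\<bar> = \<bar>mu q i\<bar> / real T"
      proof -
        fix i
        have "p_avg T p i - q i = mu q i / real T" using pavg mu_eq Tpos by (simp add: field_simps)
        then show "\<bar>p_avg T p i - q i\<bar> = \<bar>mu q i\<bar> / real T" using Tpos by simp
      qed
      then show ?thesis unfolding d_TV_def B[symmetric] by (simp add: sum_divide_distrib[symmetric])
    qed
    have PPdec: "\<And>i. PP i = mu q i + real T * q i" using mu_eq by simp
    have PPnn: "\<And>i. i \<in> B \<Longrightarrow> PP i \<ge> 0" by (rule PP_nonneg)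
    have sumPP: "(\<Sum>i\<in>B. PP i) = real T"
    proof -
      have "(\<Sum>i\<in>B. PP i) = (\<Sum>t\<in>I. \<Sum>i\<in>B. p t i)" unfolding PP_def by (rule sum.swap)
      also have "\<dots> = (\<Sum>t\<in>I. 1)" using psum by simp
      also have "\<dots> = real T" using cardI by simp
      finally show ?thesis .
    qed
    have summu: "(\<Sum>i\<in>B. \<bar>mu q i\<bar>) \<le> 2 * real T"
    proof -
      have "(\<Sum>i\<in>B. \<bar>mu q i\<bar>) \<le> (\<Sum>i\<in>B. PP i + real T * q i)"
      proof (intro sum_mono)
        fix i assume i: "i \<in> B"
        have "real T * q i \<ge> 0" using qnn[OF i] Tpos by simp
        then show "\<bar>mu q i\<bar> \<le> PP i + real T * q i" using PPnn[OF i] by (simp add: mu_eq abs_le_iff)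
      qed
      also have "\<dots> = 2 * real T" using sumPP qsum by (simp add: sum.distrib sum_distrib_left[symmetric])
      finally show ?thesis .
    qed
    have "\<epsilon> * (real T * 2) < (\<Sum>i\<in>B. \<bar>mu q i\<bar>)" using far dTV Tpos by (simp add: field_simps)
    then have "\<epsilon> * (2 * real T) < 1 * (2 * real T)" using summu by (simp add: mult_ac)
    then have e1: "\<epsilon> \<le> 1" using Tpos by (subst (asm) mult_less_cancel_right) auto
    have CS: "(\<Sum>i\<in>B. \<bar>mu q i\<bar>)\<^sup>2 \<le> 2 * real d * E"
    proof -
      define c where "c i = real d * q i + 1" for i
      have cpos: "\<And>i. i \<in> B \<Longrightarrow> c i > 0" unfolding c_def using qnn by (simp add: add_nonneg_pos)
      have "(\<Sum>i\<in>B. \<bar>mu q i\<bar>)\<^sup>2 = (\<Sum>i\<in>B. sqrt (c i) * (\<bar>mu q i\<bar> / sqrt (c i)))\<^sup>2"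
        using cpos by (intro arg_cong[where f = "\<lambda>x. x\<^sup>2"] sum.cong) (auto simp: less_imp_neq[symmetric])
      also have "\<dots> \<le> (\<Sum>i\<in>B. (sqrt (c i))\<^sup>2) * (\<Sum>i\<in>B. (\<bar>mu q i\<bar> / sqrt (c i))\<^sup>2)"
        by (rule Cauchy_Schwarz_ineq_sum)
      also have "(\<Sum>i\<in>B. (sqrt (c i))\<^sup>2) = (\<Sum>i\<in>B. c i)"
        using cpos by (intro sum.cong) (auto simp: less_imp_le)
      also have "\<dots> = 2 * real d" unfolding c_def using qsum B
        by (simp add: sum.distrib sum_distrib_left[symmetric])
      also have "(\<Sum>i\<in>B. (\<bar>mu q i\<bar> / sqrt (c i))\<^sup>2) = E"
        unfolding E_def using cpos by (intro sum.cong) (auto simp: power_divide w_def c_def less_imp_le)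
      finally show ?thesis .
    qed
    have Ebig: "E > 2 * (\<epsilon>\<^sup>2 * (real T)\<^sup>2 / real d)"
    proof -
      have "2 * \<epsilon> * real T < (\<Sum>i\<in>B. \<bar>mu q i\<bar>)" using far dTV Tpos by (simp add: field_simps)
      then have "(2 * \<epsilon> * real T)\<^sup>2 < (\<Sum>i\<in>B. \<bar>mu q i\<bar>)\<^sup>2"
        using e0 Tpos by (intro power_strict_mono) auto
      moreover have "(2 * \<epsilon> * real T)\<^sup>2 = 4 * (\<epsilon>\<^sup>2 * (real T)\<^sup>2)" by (simp add: power_mult_distrib)
      moreover have "2 * real d * E = 2 * (E * real d)" by simp
      ultimately have "2 * (\<epsilon>\<^sup>2 * (real T)\<^sup>2) < E * real d" using CS by linarith
      then show ?thesis using d1 by (simp add: field_simps)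
    qed
    have S1: "(\<Sum>i\<in>B. (w i)\<^sup>2 * (PP i)\<^sup>2) \<le> 2 * E + 2 * ((real T)\<^sup>2 / real d)"
    proof -
      have "(\<Sum>i\<in>B. (w i)\<^sup>2 * (PP i)\<^sup>2) \<le> (\<Sum>i\<in>B. 2 * (w i * (mu q i)\<^sup>2) + 2 * (real T)\<^sup>2 * (w i * q i)\<^sup>2)"
      proof (intro sum_mono)
        fix i assume i: "i \<in> B"
        have "(w i)\<^sup>2 * (PP i)\<^sup>2 = (w i * mu q i + real T * (w i * q i))\<^sup>2"
          by (subst PPdec) (simp add: power2_eq_square algebra_simps)
        also have "\<dots> \<le> 2 * (w i * mu q i)\<^sup>2 + 2 * (real T * (w i * q i))\<^sup>2"
          by (rule sq_sum_le)
        also have "(w i * mu q i)\<^sup>2 \<le> w i * (mu q i)\<^sup>2"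
        proof -
          have "(w i * mu q i)\<^sup>2 = w i * (w i * (mu q i)\<^sup>2)" by (simp add: power2_eq_square)
          also have "\<dots> \<le> w i * (mu q i)\<^sup>2"
            using mult_left_le_one_le[of "w i * (mu q i)\<^sup>2" "w i"] wnn[OF i] w1[OF i] by simp
          finally show ?thesis .
        qed
        finally show "(w i)\<^sup>2 * (PP i)\<^sup>2 \<le> 2 * (w i * (mu q i)\<^sup>2) + 2 * (real T)\<^sup>2 * (w i * q i)\<^sup>2"
          by (simp add: power_mult_distrib)
      qed
      also have "\<dots> = 2 * E + 2 * (real T)\<^sup>2 * (\<Sum>i\<in>B. (w i * q i)\<^sup>2)"
        unfolding E_def by (simp add: sum.distrib sum_distrib_left)
      also have "\<dots> \<le> 2 * E + 2 * (real T)\<^sup>2 * (1 / real d)" using w2q2 by (intro add_left_mono mult_left_mono) auto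
      finally show ?thesis by simp
    qed
    have S2: "(\<Sum>i\<in>B. PP i * (w i * mu q i)\<^sup>2) \<le> sqrt E * E + (real T / real d) * E"
    proof -
      have "(\<Sum>i\<in>B. PP i * (w i * mu q i)\<^sup>2) \<le> (\<Sum>i\<in>B. (sqrt E + real T / real d) * (w i * (mu q i)\<^sup>2))"
      proof (intro sum_mono)
        fix i assume i: "i \<in> B"
        have wmu: "(w i * mu q i)\<^sup>2 \<le> w i * (mu q i)\<^sup>2"
        proof -
          have "(w i * mu q i)\<^sup>2 = w i * (w i * (mu q i)\<^sup>2)" by (simp add: power2_eq_square)
          also have "\<dots> \<le> w i * (mu q i)\<^sup>2"
            using mult_left_le_one_le[of "w i * (mu q i)\<^sup>2" "w i"] wnn[OF i] w1[OF i] by simp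
          finally show ?thesis .
        qed
        have "w i * (mu q i)\<^sup>2 \<le> E" unfolding E_def
          using i wnn finB by (intro member_le_sum) auto
        then have "(w i * mu q i)\<^sup>2 \<le> E" using wmu by linarith
        then have a: "\<bar>w i * mu q i\<bar> \<le> sqrt E" using real_le_rsqrt by (metis real_sqrt_abs real_sqrt_le_mono)
        have "PP i * (w i * mu q i)\<^sup>2 = (w i * mu q i) * (w i * (mu q i)\<^sup>2) + real T * (w i * q i) * (w i * (mu q i)\<^sup>2)"
          by (subst PPdec) (simp add: power2_eq_square algebra_simps)
        also have "(w i * mu q i) * (w i * (mu q i)\<^sup>2) \<le> sqrt E * (w i * (mu q i)\<^sup>2)"
          using a wnn[OF i] by (intro mult_right_mono) auto
        also have "real T * (w i * q i) * (w i * (mu q i)\<^sup>2) \<le> real T * (1 / real d) * (w i * (mu q i)\<^sup>2)"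
          using wq[OF i] wnn[OF i] Tpos by (intro mult_right_mono mult_left_mono) auto
        finally show "PP i * (w i * mu q i)\<^sup>2 \<le> (sqrt E + real T / real d) * (w i * (mu q i)\<^sup>2)"
          by (simp add: algebra_simps)
      qed
      also have "\<dots> = (sqrt E + real T / real d) * E"
        by (simp only: sum_distrib_left[symmetric] E_def[symmetric])
      also have "\<dots> = sqrt E * E + (real T / real d) * E" by (simp add: algebra_simps)
      finally show ?thesis .
    qed
    have V: "EO (\<lambda>s. (ZZ I B w q s)\<^sup>2) - E\<^sup>2 \<le> 2 * E + 2 * ((real T)\<^sup>2 / real d) + 2 * E * sqrt E + 2 * (real T / real d) * E"
    proof -
      have "2 * E * sqrt E = 2 * (sqrt E * E)" "2 * (real T / real d) * E = 2 * ((real T / real d) * E)" by simp_all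
      then show ?thesis using Var S1 S2 by linarith
    qed
    have "\<tau> < E" using Ebig taupos \<tau>_def by simp
    then have "EO (\<lambda>s. if ZZ I B w q s \<le> \<tau> then 1 else 0) \<le> (EO (\<lambda>s. (ZZ I B w q s)\<^sup>2) - E\<^sup>2) / (E - \<tau>)\<^sup>2"
      using cheb_far[of \<tau> w q] EOZ by simp
    also have "\<dots> \<le> 0.01"
      unfolding \<tau>_def by (rule numeric[OF _ e0 e1 _ Ebig V]) (use d1 TK in auto)
    finally show "EO (\<lambda>s. if ZZ I B w q s \<le> \<tau> then 1 else 0) \<le> 0.01" .
  qed
qed

end


theorem theorem2p1:
  shows "\<exists>K::real. K > 0 \<and>
    (\<forall>(d::nat) (q::nat \<Rightarrow> real) (\<epsilon>::real) (T::nat).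
       d \<ge> 1 \<longrightarrow> is_dist d q \<longrightarrow> \<epsilon> > 0 \<longrightarrow> real T \<ge> K * sqrt (real d) / \<epsilon>^2 \<longrightarrow>
       (\<exists>A :: (nat \<Rightarrow> nat \<times> nat) \<Rightarrow> real.
          (\<forall>s. 0 \<le> A s \<and> A s \<le> 1) \<and>
          (\<forall>p :: nat \<Rightarrow> nat \<Rightarrow> real. (\<forall>t\<in>{1..T}. is_dist d (p t)) \<longrightarrow>
             ((\<forall>i\<in>{1..d}. p_avg T p i = q i) \<longrightarrow> accept_prob d T A p \<ge> 0.99) \<and>
             (d_TV d (p_avg T p) q > \<epsilon> \<longrightarrow> 1 - accept_prob d T A p \<ge> 0.99))))"
proof (intro exI[of _ "2000::real"] conjI allI impI)
  show "(2000::real) > 0" by simp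
next
  fix d :: nat and q :: "nat \<Rightarrow> real" and \<epsilon> :: real and T :: nat
  assume d1: "d \<ge> 1" and qd: "is_dist d q" and e0: "\<epsilon> > 0"
    and TK: "real T \<ge> 2000 * sqrt (real d) / \<epsilon>^2"
  define w where "w = (\<lambda>i. 1 / (real d * q i + 1))"
  define \<tau> where "\<tau> = \<epsilon>\<^sup>2 * (real T)\<^sup>2 / real d"
  define A where "A = (\<lambda>s. if ZZ {1..T} {1..d} w q s \<le> \<tau> then 1 else (0::real))"
  show "\<exists>A :: (nat \<Rightarrow> nat \<times> nat) \<Rightarrow> real.
          (\<forall>s. 0 \<le> A s \<and> A s \<le> 1) \<and>
          (\<forall>p :: nat \<Rightarrow> nat \<Rightarrow> real. (\<forall>t\<in>{1..T}. is_dist d (p t)) \<longrightarrow>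
             ((\<forall>i\<in>{1..d}. p_avg T p i = q i) \<longrightarrow> accept_prob d T A p \<ge> 0.99) \<and>
             (d_TV d (p_avg T p) q > \<epsilon> \<longrightarrow> 1 - accept_prob d T A p \<ge> 0.99))"
  proof (intro exI[of _ A] conjI allI impI)
    fix s show "0 \<le> A s" "A s \<le> 1" unfolding A_def by auto
  next
    fix p :: "nat \<Rightarrow> nat \<Rightarrow> real"
    assume pd: "\<forall>t\<in>{1..T}. is_dist d (p t)"
    interpret dists2 "{1..T}" "{1..d}" p
      by unfold_locales (use pd in \<open>auto simp: is_dist_def\<close>)
    have acc: "accept_prob d T A p = EO A"
      unfolding accept_prob_def sample_space_def EO_def by simp
    have mc: "((\<forall>i\<in>{1..d}. p_avg T p i = q i) \<longrightarrow> 1 - EO (\<lambda>s. if ZZ {1..T} {1..d} w q s \<le> \<tau> then 1 else 0) \<le> 0.01) \<and>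
         (d_TV d (p_avg T p) q > \<epsilon> \<longrightarrow> EO (\<lambda>s. if ZZ {1..T} {1..d} w q s \<le> \<tau> then 1 else 0) \<le> 0.01)"
      by (rule main_cases[OF refl refl d1 qd e0 TK w_def \<tau>_def])
    {
      assume "\<forall>i\<in>{1..d}. p_avg T p i = q i"
      then show "accept_prob d T A p \<ge> 0.99" using mc acc unfolding A_def by simp
    next
      assume "d_TV d (p_avg T p) q > \<epsilon>"
      then show "1 - accept_prob d T A p \<ge> 0.99" using mc acc unfolding A_def by simp
    }
  qed
qed

end
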